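(* Let $f:\mathbb{R}^n\to\mathbb{R}^n$ and $x^*\in\mathbb{R}^n$ with $f(x^* )=0$. Assume: $J_f(x^* )$ has a one-dimensional null space $\mathcal{N}=\mathrm{span}\{\phi\}$ and closed range $\mathcal{X}$ with $\mathbb{R}^n=\mathcal{N}\oplus\mathcal{X}$; $f$ is twice Lipschitz continuously differentiable in a neighborhood of $x^*$; and, with $P_\mathcal{N}$ the projection onto $\mathcal{N}$ parallel to $\mathcal{X}$, $P_\mathcal{N}H_f(x^* )(\phi,\phi)\neq 0$. Assume moreover that for every $x$ with $P_\mathcal{N}(x-x^* )\neq 0$ the linear map $\bar D_1(x):\mathcal{N}\to\mathcal{N}$, $\bar D_1(x)(z)=P_\mathcal{N}H_f(x^* )\big(P_\mathcal{N}(x-x^* ),P_\mathcal{N}z\big)$, is nonsingular. Let $\{x_j\}_j$ be iterates generated by an nlKrylov method (as in the context) and suppose there is a constant $c$ such that $\|t_j\|\le c\|f(x_j)\|^2$ for all $j$, where $t_j=J_f(x_j)(x_{j+1}-x_j)+f(x_j)$. Then for $\rho>0$ and $\gamma>0$ sufficiently small, $J_f(x_0)^{-1}$ exists for all $x_0\in W(\rho,\gamma)$, and the sequence $\{x_j\}_j$ converges to $x^*$ with $$\|P_\mathcal{X}(x_{j+1}-x^* )\|\le K_1\|x_j-x^*\|^2$$ for some constant $K_1>0$, and $$\lim_{j\to\infty}\frac{\|P_\mathcal{N}(x_{j+1}-x^* )\|}{\|P_\mathcal{N}(x_j-x^* )\|}=\frac12.$$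
   Context: Norms are Euclidean 2-norms; $J_f(x)$ is the Jacobian and $H_f(x)$ the Hessian (second derivative, a symmetric bilinear map $\mathbb{R}^n\times\mathbb{R}^n\to\mathbb{R}^n$) of $f$ at $x$. $P_\mathcal{X}=I-P_\mathcal{N}$. For $\rho,\gamma>0$, the region $W(\rho,\gamma)=\{x\in\mathbb{R}^n:\ 0<\|x-x^*\|<\rho,\ \|P_\mathcal{X}(x-x^* )\|\le\gamma\|P_\mathcal{N}(x-x^* )\|\}$. An nlKrylov method solves $f(x)=0$ as follows: at iteration $j$ it holds matrices $P_j,V_j\in\mathbb{R}^{n\times n_j}$ (search directions and approximations of $J_f(x_j)P_j$, built from previous iterates, Jacobian-vector products and an inner linear solver applied to $J_f(x_j)\hat p=-f(x_j)$), with $V_j^TV_j=I_{n_j}$; it sets $y_j=-V_j^Tf(x_j)$ and updates $x_{j+1}=x_j+P_jy_j$. The vector $t_j$ is the inexactness of this step viewed as an inexact Newton step. *)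

theory Defs
  imports "HOL-Analysis.Analysis"
begin

definition proj_along :: "'a::real_vector set \<Rightarrow> 'a set \<Rightarrow> 'a \<Rightarrow> 'a" where
  "proj_along N X v = (THE u. u \<in> N \<and> v - u \<in> X)"

definition W_region :: "('a::real_normed_vector \<Rightarrow> 'a) \<Rightarrow> 'a \<Rightarrow> real \<Rightarrow> real \<Rightarrow> 'a set" where
  "W_region PN xs \<rho> \<gamma> = {x. 0 < norm (x - xs) \<and> norm (x - xs) < \<rho> \<and>
      norm ((x - xs) - PN (x - xs)) \<le> \<gamma> * norm (PN (x - xs))}"

text \<open>Iterates of an nlKrylov method: at step j, the columns of P_j and V_j are given as
  lists of vectors of equal length n_j; V_j has orthonormal columns; y_j = - V_j^T f(x_j)
  and x_{j+1} = x_j + P_j y_j.\<close>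
definition nlkrylov_iterates ::
  "('a::real_inner \<Rightarrow> 'a) \<Rightarrow> (nat \<Rightarrow> 'a) \<Rightarrow> (nat \<Rightarrow> 'a list) \<Rightarrow> (nat \<Rightarrow> 'a list) \<Rightarrow> bool" where
  "nlkrylov_iterates f x P V \<longleftrightarrow>
     (\<forall>j. length (P j) = length (V j) \<and>
        (\<forall>a < length (V j). \<forall>b < length (V j).
            (V j ! a) \<bullet> (V j ! b) = (if a = b then 1 else 0)) \<and>
        x (Suc j) = x j + (\<Sum>k < length (V j). (- ((V j ! k) \<bullet> f (x j))) *\<^sub>R (P j ! k)))"

end

theory Submission
  imports Defs
begin

locale nk =
  fixes f :: "'a::euclidean_space \<Rightarrow> 'a" and J :: "'a \<Rightarrow> 'a \<Rightarrow>\<^sub>L 'a"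
    and H :: "'a \<Rightarrow> 'a \<Rightarrow>\<^sub>L 'a \<Rightarrow>\<^sub>L 'a"
    and xs :: 'a and \<delta> L :: real and \<phi> :: 'a and \<psi> :: "'a \<Rightarrow> real" and C\<psi> \<alpha> :: real
  assumes delta_pos: "\<delta> > 0"
    and d1: "\<And>x. x \<in> ball xs \<delta> \<Longrightarrow> (f has_derivative blinfun_apply (J x)) (at x)"
    and d2: "\<And>x. x \<in> ball xs \<delta> \<Longrightarrow> (J has_derivative blinfun_apply (H x)) (at x)"
    and lip: "\<And>x y. x \<in> ball xs \<delta> \<Longrightarrow> y \<in> ball xs \<delta> \<Longrightarrow> norm (H x - H y) \<le> L * norm (x - y)"
    and L_nn: "L \<ge> 0"
    and root: "f xs = 0"
    and psi_add: "\<And>u v. \<psi> (u + v) = \<psi> u + \<psi> v"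
    and psi_scale: "\<And>c v. \<psi> (c *\<^sub>R v) = c * \<psi> v"
    and psi_bd: "\<And>v. \<bar>\<psi> v\<bar> \<le> C\<psi> * norm v" and Cpsi_pos: "C\<psi> > 0"
    and psi_phi: "\<psi> \<phi> = 1"
    and A_phi: "J xs \<phi> = 0"
    and psi_A: "\<And>v. \<psi> (J xs v) = 0"
    and alpha_pos: "\<alpha> > 0"
    and A_below: "\<And>v. \<alpha> * norm (v - \<psi> v *\<^sub>R \<phi>) \<le> norm (J xs (v - \<psi> v *\<^sub>R \<phi>))"
    and beta_nz: "\<psi> (H xs \<phi> \<phi>) \<noteq> 0"
begin

lemma T1:
  assumes x: "x \<in> ball xs \<delta>"
  shows "norm (J x - J xs - H xs (x - xs)) \<le> L * (norm (x - xs))^2"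
proof -
  let ?S = "closed_segment xs x"
  have sub: "?S \<subseteq> ball xs \<delta>"
    using x delta_pos by (intro closed_segment_subset) auto
  let ?g = "\<lambda>y. J y - H xs (y - xs)"
  have der: "(?g has_derivative blinfun_apply (H y - H xs)) (at y within ?S)" if "y \<in> ?S" for y
  proof -
    have "(J has_derivative blinfun_apply (H y)) (at y within ?S)"
      using d2[of y] sub that by (meson has_derivative_at_withinI subsetD)
    moreover have "((\<lambda>y. H xs (y - xs)) has_derivative blinfun_apply (H xs)) (at y within ?S)"
      by (auto intro!: derivative_eq_intros)
    ultimately show ?thesis
      by (auto intro!: derivative_eq_intros simp: blinfun.diff_left)
  qed
  have bd: "onorm (blinfun_apply (H y - H xs)) \<le> L * norm (x - xs)" if "y \<in> ?S" for y
  proof -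
    have "onorm (blinfun_apply (H y - H xs)) = norm (H y - H xs)"
      by (simp add: norm_blinfun.rep_eq)
    also have "\<dots> \<le> L * norm (y - xs)" using lip[of y xs] sub that delta_pos by auto
    also have "\<dots> \<le> L * norm (x - xs)"
      using segment_bound1[OF that] L_nn by (simp add: mult_left_mono)
    finally show ?thesis .
  qed
  have "norm (?g x - ?g xs) \<le> L * norm (x - xs) * norm (x - xs)"
    by (rule differentiable_bound[OF convex_closed_segment der bd]) auto
  then show ?thesis by (simp add: power2_eq_square blinfun.zero_right algebra_simps)
qed

lemma T2:
  assumes x: "x \<in> ball xs \<delta>"
  shows "norm (f x - J xs (x - xs) - (1/2) *\<^sub>R (H xs (x - xs) (x - xs))) \<le> L * (norm (x - xs))^3"
proof -
  define e where "e = x - xs"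
  let ?p = "\<lambda>t::real. xs + t *\<^sub>R e"
  let ?S = "{0..1::real}"
  have pin: "?p t \<in> ball xs \<delta>" if "t \<in> ?S" for t
  proof -
    have "norm (t *\<^sub>R e) \<le> norm e" using that by (auto simp: mult_left_le_one_le)
    then show ?thesis using x by (simp add: e_def dist_norm norm_minus_commute)
  qed
  let ?g = "\<lambda>t. f (?p t) - t *\<^sub>R J xs e - (t^2/2) *\<^sub>R H xs e e"
  let ?g' = "\<lambda>t h. h *\<^sub>R (J (?p t) e - J xs e - t *\<^sub>R H xs e e)"
  have der: "(?g has_derivative ?g' t) (at t within ?S)" if t: "t \<in> ?S" for t
  proof -
    have p: "(?p has_derivative (\<lambda>h. h *\<^sub>R e)) (at t within ?S)"
      by (auto intro!: derivative_eq_intros)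
    have fd: "(f has_derivative blinfun_apply (J (?p t))) (at (?p t) within (?p ` ?S))"
      using d1[OF pin[OF t]] by (rule has_derivative_at_withinI)
    have c: "((\<lambda>t. f (?p t)) has_derivative (\<lambda>h. J (?p t) (h *\<^sub>R e))) (at t within ?S)"
      by (rule has_derivative_in_compose[OF p fd])
    have q1: "((\<lambda>t. t *\<^sub>R J xs e) has_derivative (\<lambda>h. h *\<^sub>R J xs e)) (at t within ?S)"
      by (auto intro!: derivative_eq_intros)
    have q2: "((\<lambda>t. (t^2/2) *\<^sub>R H xs e e) has_derivative (\<lambda>h. (t*h) *\<^sub>R H xs e e)) (at t within ?S)"
      by (auto intro!: derivative_eq_intros simp: power2_eq_square)
    show ?thesis
      apply (rule has_derivative_eq_rhs)
       apply (rule has_derivative_diff[OF has_derivative_diff[OF c q1] q2])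
      apply (auto simp: fun_eq_iff blinfun.scaleR_right algebra_simps)
      done
  qed
  have bd: "onorm (?g' t) \<le> L * norm e ^ 3" if t: "t \<in> ?S" for t
  proof (rule onorm_bound)
    show "0 \<le> L * norm e ^ 3" using L_nn by simp
    fix h :: real
    have eq: "J (?p t) e - J xs e - t *\<^sub>R H xs e e = (J (?p t) - J xs - H xs (?p t - xs)) e"
      by (simp add: blinfun.diff_left blinfun.scaleR_left blinfun.scaleR_right)
    have "norm (J (?p t) e - J xs e - t *\<^sub>R H xs e e) \<le> norm (J (?p t) - J xs - H xs (?p t - xs)) * norm e"
      unfolding eq by (rule norm_blinfun)
    also have "\<dots> \<le> (L * (norm (?p t - xs))^2) * norm e"
      by (rule mult_right_mono[OF T1[OF pin[OF t]]]) simp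
    also have "\<dots> \<le> (L * (norm e)^2) * norm e"
    proof -
      have "norm (?p t - xs) \<le> norm e" using t by (auto simp: mult_left_le_one_le)
      then have "(norm (?p t - xs))^2 \<le> (norm e)^2" by (simp add: power_mono)
      then show ?thesis using L_nn by (simp add: mult_left_mono mult_right_mono)
    qed
    finally have "norm (J (?p t) e - J xs e - t *\<^sub>R H xs e e) \<le> L * norm e ^ 3"
      by (simp add: power3_eq_cube power2_eq_square algebra_simps)
    then show "norm (?g' t h) \<le> L * norm e ^ 3 * norm h"
    proof -
      assume a: "norm (J (?p t) e - J xs e - t *\<^sub>R H xs e e) \<le> L * norm e ^ 3"
      have "\<bar>h\<bar> * norm (J (?p t) e - J xs e - t *\<^sub>R H xs e e) \<le> \<bar>h\<bar> * (L * norm e ^ 3)"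
        by (rule mult_left_mono[OF a]) simp
      then show ?thesis by (simp add: mult_ac)
    qed
  qed
  have "norm (?g 1 - ?g 0) \<le> L * norm e ^ 3 * norm (1 - 0::real)"
    by (rule differentiable_bound[OF convex_real_interval(5) der bd]) auto
  then show ?thesis by (simp add: e_def root blinfun.zero_left blinfun.zero_right)
qed

definition Q where "Q v = v - \<psi> v *\<^sub>R \<phi>"
abbreviation "Mp \<equiv> norm \<phi>"
abbreviation "MB \<equiv> norm (H xs)"
abbreviation "\<beta> \<equiv> \<psi> (H xs \<phi> \<phi>)"
abbreviation "kk \<equiv> C\<psi> / \<bar>\<beta>\<bar>"
abbreviation "DD \<equiv> Mp * kk * MB * Mp"

lemma psi_diff: "\<psi> (u - v) = \<psi> u - \<psi> v"
proof -
  have "\<psi> (u - v) = \<psi> (u + (-1) *\<^sub>R v)" by simp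
  also have "\<dots> = \<psi> u - \<psi> v" by (simp only: psi_add psi_scale) simp?
  finally show ?thesis .
qed

lemma psi_zero: "\<psi> 0 = 0"
  using psi_scale[of 0 0] by simp

lemma psi_Q: "\<psi> (Q v) = 0"
  by (simp add: Q_def psi_diff psi_scale psi_phi)

lemma decomp: "v = \<psi> v *\<^sub>R \<phi> + Q v"
  by (simp add: Q_def)

lemma phi_nz: "\<phi> \<noteq> 0"
  using psi_phi psi_zero by auto

lemma Mp_pos: "Mp > 0" using phi_nz by simp

lemma A_Q: "J xs (Q v) = J xs v"
  by (simp add: Q_def blinfun.diff_right blinfun.scaleR_right A_phi)

lemma Q_lin: "Q (u + v) = Q u + Q v" "Q (c *\<^sub>R v) = c *\<^sub>R Q v" "Q (u - v) = Q u - Q v"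
  by (simp_all add: Q_def psi_add psi_scale psi_diff algebra_simps)

lemma Q_phi: "Q \<phi> = 0" by (simp add: Q_def psi_phi)

lemma psi_le: "\<bar>\<psi> v\<bar> \<le> C\<psi> * norm v" by (rule psi_bd)

lemma norm_HH: "norm (H y p q) \<le> norm (H y) * norm p * norm q"
proof -
  have "norm (H y p q) \<le> norm (H y p) * norm q" by (rule norm_blinfun)
  also have "\<dots> \<le> norm (H y) * norm p * norm q"
    by (rule mult_right_mono[OF norm_blinfun]) simp
  finally show ?thesis .
qed

lemma lin_scale: "U \<le> p * R + q * Z \<Longrightarrow> 0 \<le> (k::real) \<Longrightarrow> k * U \<le> (k * p) * R + (k * q) * Z"
  by (drule mult_left_mono[of _ _ k]) (simp_all add: algebra_simps)

lemma lin_scale3: "U \<le> p * R + q * Y + t * Z \<Longrightarrow> 0 \<le> (k::real) \<Longrightarrow> k * U \<le> (k * p) * R + (k * q) * Y + (k * t) * Z"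
  by (drule mult_left_mono[of _ _ k]) (simp_all add: algebra_simps)

lemma DD0: "DD \<ge> 0" using Cpsi_pos by simp

lemma inv_bound:
  assumes r1: "0 < r1" "r1 \<le> 1" "r1 < \<delta>" "(MB + L) * r1 * (DD + 1) \<le> \<alpha> / 4"
      "Mp * kk * (2 * L * Mp) * r1 \<le> 1/16"
    and g1: "0 \<le> \<gamma>1" "\<gamma>1 \<le> Mp" "Mp * kk * MB * \<gamma>1 \<le> 1/16"
    and x: "norm (x - xs) \<le> r1" "\<psi> (x - xs) \<noteq> 0"
      "norm (Q (x - xs)) \<le> \<gamma>1 * \<bar>\<psi> (x - xs)\<bar>"
  shows "norm v * \<bar>\<psi> (x - xs)\<bar> \<le> 2 * (Mp * kk + (DD + 1) * (C\<psi> / \<alpha>)) * norm (J x v)"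
    and "norm (Q v) \<le> ((1 + (MB + L) * (2 * Mp) * (2 * (Mp * kk + (DD + 1) * (C\<psi> / \<alpha>)))) / \<alpha>) * norm (J x v)"
proof -
  define e where "e = x - xs"
  define s where "s = \<psi> e"
  define w where "w = Q e"
  define \<epsilon> where "\<epsilon> = norm e"
  define r where "r = J x v"
  define a where "a = \<psi> v"
  define u where "u = Q v"
  have ve: "v = a *\<^sub>R \<phi> + u" unfolding a_def u_def by (rule decomp)
  have ee: "e = s *\<^sub>R \<phi> + w" unfolding s_def w_def by (rule decomp)
  have s_nz: "s \<noteq> 0" using x by (simp add: s_def e_def)
  have w_le: "norm w \<le> \<gamma>1 * \<bar>s\<bar>" using x by (simp add: w_def s_def e_def)
  have eps_le: "\<epsilon> \<le> 2 * Mp * \<bar>s\<bar>"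
  proof -
    have "\<epsilon> \<le> norm (s *\<^sub>R \<phi>) + norm w" unfolding \<epsilon>_def ee by (rule norm_triangle_ineq)
    also have "\<dots> \<le> \<bar>s\<bar> * Mp + \<gamma>1 * \<bar>s\<bar>" using w_le by simp
    also have "\<dots> \<le> 2 * Mp * \<bar>s\<bar>" using mult_right_mono[OF g1(2), of "\<bar>s\<bar>"] by (simp add: algebra_simps)
    finally show ?thesis .
  qed
  have s_le: "\<bar>s\<bar> \<le> C\<psi> * \<epsilon>" unfolding s_def \<epsilon>_def by (rule psi_le)
  have eps_r1: "\<epsilon> \<le> r1" using x by (simp add: \<epsilon>_def e_def)
  have xb: "x \<in> ball xs \<delta>" using x r1 by (simp add: dist_norm norm_minus_commute)
  define R2 where "R2 = J x - J xs - H xs e"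
  have R2n: "norm R2 \<le> L * \<epsilon>^2" unfolding R2_def \<epsilon>_def e_def by (rule T1[OF xb])
  have Jx: "r = J xs v + H xs e v + R2 v"
    by (simp add: r_def R2_def blinfun.diff_left)
  have nHe: "norm (H xs e v) \<le> MB * \<epsilon> * norm v" unfolding \<epsilon>_def by (rule norm_HH)
  have nR2: "norm (R2 v) \<le> L * \<epsilon>^2 * norm v"
    by (rule order_trans[OF norm_blinfun mult_right_mono[OF R2n]]) simp
  have F3: "\<alpha> * norm u \<le> norm r + MB * \<epsilon> * norm v + L * \<epsilon>^2 * norm v"
  proof -
    have "\<alpha> * norm u \<le> norm (J xs u)" using A_below[of v] by (simp add: u_def Q_def)
    also have "J xs u = r - H xs e v - R2 v" using Jx A_Q[of v] by (simp add: u_def)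
    also have "norm (r - H xs e v - R2 v) \<le> norm r + norm (H xs e v) + norm (R2 v)"
      using norm_triangle_ineq4[of "r - H xs e v" "R2 v"] norm_triangle_ineq4[of r "H xs e v"] by linarith
    finally show ?thesis using nHe nR2 by linarith
  qed
  have Hev: "H xs e v = (s * a) *\<^sub>R H xs \<phi> \<phi> + s *\<^sub>R H xs \<phi> u + H xs w v"
  proof -
    have 1: "H xs e v = s *\<^sub>R H xs \<phi> v + H xs w v"
      by (simp add: ee blinfun.bilinear_simps)
    have 2: "H xs \<phi> v = a *\<^sub>R H xs \<phi> \<phi> + H xs \<phi> u"
      by (subst ve) (simp add: blinfun.bilinear_simps)
    show ?thesis unfolding 1 2 by (simp add: scaleR_add_right)
  qed
  have F4: "\<bar>s\<bar> * \<bar>a\<bar> * \<bar>\<beta>\<bar> \<le> C\<psi> * norm r + \<bar>s\<bar> * (C\<psi> * MB * Mp * norm u)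
            + C\<psi> * MB * norm w * norm v + C\<psi> * (L * \<epsilon>^2 * norm v)"
  proof -
    have "\<psi> r = \<psi> (H xs e v) + \<psi> (R2 v)" using Jx psi_add psi_A by simp
    also have "\<psi> (H xs e v) = s * a * \<beta> + s * \<psi> (H xs \<phi> u) + \<psi> (H xs w v)"
      unfolding Hev by (simp add: psi_add psi_scale)
    finally have eq: "s * a * \<beta> = \<psi> r - s * \<psi> (H xs \<phi> u) - \<psi> (H xs w v) - \<psi> (R2 v)" by simp
    have "\<bar>s * a * \<beta>\<bar> \<le> \<bar>\<psi> r\<bar> + \<bar>s\<bar> * \<bar>\<psi> (H xs \<phi> u)\<bar> + \<bar>\<psi> (H xs w v)\<bar> + \<bar>\<psi> (R2 v)\<bar>"
      unfolding eq by (simp add: abs_mult[symmetric])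
    moreover have "\<bar>\<psi> r\<bar> \<le> C\<psi> * norm r" by (rule psi_le)
    moreover have "\<bar>\<psi> (H xs \<phi> u)\<bar> \<le> C\<psi> * MB * Mp * norm u"
      using order_trans[OF psi_le mult_left_mono[OF norm_HH[of xs \<phi> u]]] Cpsi_pos by (simp add: mult_ac)
    moreover have "\<bar>\<psi> (H xs w v)\<bar> \<le> C\<psi> * MB * norm w * norm v"
      using order_trans[OF psi_le mult_left_mono[OF norm_HH[of xs w v]]] Cpsi_pos by (simp add: mult_ac)
    moreover have "\<bar>\<psi> (R2 v)\<bar> \<le> C\<psi> * (L * \<epsilon>^2 * norm v)"
      using order_trans[OF psi_le mult_left_mono[OF nR2]] Cpsi_pos by (simp add: mult_ac)
    ultimately show ?thesis
      using mult_left_mono[OF \<open>\<bar>\<psi> (H xs \<phi> u)\<bar> \<le> _\<close> abs_ge_zero[of s]]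
      by (simp add: abs_mult)
  qed
  define Z where "Z = norm v * \<bar>s\<bar>"
  define U where "U = norm u * \<bar>s\<bar>"
  define Aa where "Aa = \<bar>a\<bar> * \<bar>s\<bar>"
  define R where "R = norm r"
  have Z0: "Z \<ge> 0" "U \<ge> 0" "Aa \<ge> 0" "R \<ge> 0" by (simp_all add: Z_def U_def Aa_def R_def)
  have eps0: "\<epsilon> \<ge> 0" by (simp add: \<epsilon>_def)
  have S1: "Z \<le> Mp * Aa + U"
  proof -
    have "norm v \<le> \<bar>a\<bar> * Mp + norm u"
      using norm_triangle_ineq[of "a *\<^sub>R \<phi>" u] ve by simp
    from mult_right_mono[OF this abs_ge_zero[of s]] show ?thesis
      by (simp add: Z_def Aa_def U_def algebra_simps)
  qed
  have sC: "\<bar>s\<bar> \<le> C\<psi>"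
    using s_le eps_r1 r1(2) Cpsi_pos by (meson mult_left_le order_trans eps0 less_imp_le mult_left_mono)
  have MLb: "MB * \<epsilon> + L * \<epsilon>^2 \<le> (MB + L) * r1"
  proof -
    have "\<epsilon>^2 \<le> r1" using eps_r1 eps0 r1(2) unfolding power2_eq_square by (metis mult_le_one order_trans mult_right_le_one_le)
    then have "L * \<epsilon>^2 \<le> L * r1" using L_nn by (simp add: mult_left_mono)
    moreover have "MB * \<epsilon> \<le> MB * r1" using eps_r1 by (simp add: mult_left_mono)
    ultimately show ?thesis by (simp add: algebra_simps)
  qed
  have S2: "\<alpha> * U \<le> C\<psi> * R + ((MB + L) * r1) * Z"
  proof -
    have "\<alpha> * norm u * \<bar>s\<bar> \<le> (norm r + (MB * \<epsilon> + L * \<epsilon>^2) * norm v) * \<bar>s\<bar>"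
      using mult_right_mono[OF F3 abs_ge_zero[of s]] by (simp add: algebra_simps)
    also have "\<dots> = norm r * \<bar>s\<bar> + (MB * \<epsilon> + L * \<epsilon>^2) * Z" by (simp add: Z_def algebra_simps)
    also have "\<dots> \<le> norm r * C\<psi> + ((MB + L) * r1) * Z"
      by (rule add_mono[OF mult_left_mono[OF sC] mult_right_mono[OF MLb Z0(1)]]) simp
    finally show ?thesis by (simp add: U_def R_def mult_ac)
  qed
  have S3: "Mp * Aa \<le> Mp * kk * R + DD * U + Z / 8"
  proof -
    have t1: "C\<psi> * MB * norm w * norm v \<le> C\<psi> * MB * \<gamma>1 * Z"
    proof -
      have "norm w * norm v \<le> \<gamma>1 * \<bar>s\<bar> * norm v" using w_le by (simp add: mult_right_mono)
      from mult_left_mono[OF this, of "C\<psi> * MB"] show ?thesis using Cpsi_pos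
        by (simp add: Z_def mult_ac)
    qed
    have t2: "C\<psi> * (L * \<epsilon>^2 * norm v) \<le> C\<psi> * (L * (2 * Mp) * r1) * Z"
    proof -
      have "\<epsilon>^2 \<le> r1 * (2 * Mp * \<bar>s\<bar>)"
        unfolding power2_eq_square using eps0 r1 by (intro mult_mono[OF eps_r1 eps_le]) auto
      then have "L * \<epsilon>^2 * norm v \<le> L * (r1 * (2 * Mp * \<bar>s\<bar>)) * norm v"
        using L_nn by (simp add: mult_left_mono mult_right_mono)
      then show ?thesis using Cpsi_pos by (simp add: Z_def mult_ac)
    qed
    have "\<bar>\<beta>\<bar> * Aa \<le> C\<psi> * R + C\<psi> * MB * Mp * U + (C\<psi> * MB * \<gamma>1 + C\<psi> * (L * (2 * Mp) * r1)) * Z"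
      using F4 t1 t2 by (simp add: Aa_def R_def U_def algebra_simps)
    from divide_right_mono[OF this, of "\<bar>\<beta>\<bar>"]
    have e1: "Aa \<le> (C\<psi> * R + C\<psi> * MB * Mp * U + (C\<psi> * MB * \<gamma>1 + C\<psi> * (L * (2 * Mp) * r1)) * Z) / \<bar>\<beta>\<bar>"
      using beta_nz by simp
    have e2: "(C\<psi> * R + C\<psi> * MB * Mp * U + (C\<psi> * MB * \<gamma>1 + C\<psi> * (L * (2 * Mp) * r1)) * Z) / \<bar>\<beta>\<bar>
       = kk * R + kk * MB * Mp * U + (kk * MB * \<gamma>1 + kk * (L * (2 * Mp) * r1)) * Z"
      using beta_nz by (simp add: field_simps)
    from e1 e2 have "Aa \<le> kk * R + (kk * MB * Mp) * U + (kk * MB * \<gamma>1 + kk * (L * (2 * Mp) * r1)) * Z"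
      by simp
    from lin_scale3[OF this less_imp_le[OF Mp_pos]]
    have "Mp * Aa \<le> (Mp * kk) * R + (Mp * (kk * MB * Mp)) * U + (Mp * (kk * MB * \<gamma>1 + kk * (L * (2 * Mp) * r1))) * Z" .
    moreover have "Mp * (kk * MB * Mp) = DD" by (simp add: mult_ac)
    moreover have "Mp * (kk * MB * \<gamma>1 + kk * (L * (2 * Mp) * r1)) = (Mp * kk * MB * \<gamma>1 + Mp * kk * (2 * L * Mp) * r1)"
      by (simp add: algebra_simps)
    ultimately have "Mp * Aa \<le> Mp * kk * R + DD * U + (Mp * kk * MB * \<gamma>1 + Mp * kk * (2 * L * Mp) * r1) * Z"
      by simp
    moreover have "(Mp * kk * MB * \<gamma>1 + Mp * kk * (2 * L * Mp) * r1) * Z \<le> (1/8) * Z"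
    proof (rule mult_right_mono[OF _ Z0(1)])
      show "Mp * kk * MB * \<gamma>1 + Mp * kk * (2 * L * Mp) * r1 \<le> 1/8" using r1(5) g1(3) by linarith
    qed
    ultimately show ?thesis by linarith
  qed
  have S4: "(DD + 1) * U \<le> (DD + 1) * (C\<psi> / \<alpha>) * R + Z / 4"
  proof -
    have "U \<le> (C\<psi> / \<alpha>) * R + ((MB + L) * r1 / \<alpha>) * Z"
      using S2 alpha_pos by (simp add: field_simps)
    then have "(DD + 1) * U \<le> ((DD + 1) * (C\<psi> / \<alpha>)) * R + ((DD + 1) * ((MB + L) * r1 / \<alpha>)) * Z"
      by (rule lin_scale) (use DD0 in simp)
    moreover have "((DD + 1) * ((MB + L) * r1 / \<alpha>)) * Z \<le> (1/4) * Z"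
    proof (rule mult_right_mono[OF _ Z0(1)])
      have "(DD + 1) * ((MB + L) * r1 / \<alpha>) = (MB + L) * r1 * (DD + 1) / \<alpha>" by simp
      also have "\<dots> \<le> 1/4"
        using r1(4) alpha_pos by (simp only: pos_divide_le_eq) linarith?
      finally show "(DD + 1) * ((MB + L) * r1 / \<alpha>) \<le> 1/4" .
    qed
    ultimately show ?thesis by linarith
  qed
  have eqA: "(DD + 1) * U = DD * U + U" by (simp add: algebra_simps)
  have eqB: "2 * (Mp * kk + (DD + 1) * (C\<psi> / \<alpha>)) * R = 2 * (Mp * kk * R) + 2 * ((DD + 1) * (C\<psi> / \<alpha>) * R)"
    by (simp only: algebra_simps)
  have "Z \<le> 2 * (Mp * kk + (DD + 1) * (C\<psi> / \<alpha>)) * R"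
    using S1 S3 S4 Z0 eqA eqB by linarith
  then have ZB: "Z \<le> 2 * (Mp * kk + (DD + 1) * (C\<psi> / \<alpha>)) * R" .
  then show "norm v * \<bar>\<psi> (x - xs)\<bar> \<le> 2 * (Mp * kk + (DD + 1) * (C\<psi> / \<alpha>)) * norm (J x v)"
    by (simp add: Z_def R_def s_def e_def r_def)
  define C1 where "C1 = 2 * (Mp * kk + (DD + 1) * (C\<psi> / \<alpha>))"
  have ev: "\<epsilon> * norm v \<le> (2 * Mp) * (C1 * R)"
  proof -
    have "\<epsilon> * norm v \<le> (2 * Mp * \<bar>s\<bar>) * norm v" by (rule mult_right_mono[OF eps_le]) simp
    also have "\<dots> = (2 * Mp) * Z" by (simp add: Z_def mult_ac)
    also have "\<dots> \<le> (2 * Mp) * (C1 * R)" using ZB Mp_pos by (simp add: C1_def)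
    finally show ?thesis .
  qed
  have "\<alpha> * norm u \<le> R + (MB + L) * (\<epsilon> * norm v)"
  proof -
    have "\<epsilon>^2 \<le> \<epsilon>" using eps_r1 eps0 r1(2) unfolding power2_eq_square
      by (metis mult_right_le_one_le order_trans)
    then have "L * \<epsilon>^2 * norm v \<le> L * \<epsilon> * norm v" using L_nn by (simp add: mult_left_mono mult_right_mono)
    then show ?thesis using F3 by (simp add: R_def algebra_simps)
  qed
  also have "\<dots> \<le> R + (MB + L) * ((2 * Mp) * (C1 * R))"
    using ev L_nn by (simp add: mult_left_mono)
  also have "\<dots> = (1 + (MB + L) * (2 * Mp) * C1) * R" by (simp add: algebra_simps)
  finally have "norm u \<le> ((1 + (MB + L) * (2 * Mp) * C1) / \<alpha>) * R"
    using alpha_pos by (simp add: field_simps)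
  then show "norm (Q v) \<le> ((1 + (MB + L) * (2 * Mp) * (2 * (Mp * kk + (DD + 1) * (C\<psi> / \<alpha>)))) / \<alpha>) * norm (J x v)"
    by (simp add: u_def C1_def R_def r_def)
qed

abbreviation "CI1 \<equiv> 2 * (Mp * kk + (DD + 1) * (C\<psi> / \<alpha>))"
abbreviation "CI2 \<equiv> (1 + (MB + L) * (2 * Mp) * CI1) / \<alpha>"
abbreviation "MA \<equiv> norm (J xs)"
abbreviation "KF \<equiv> MA + (MB / 2 + L) * (2 * Mp)"
definition "KP c = MB * Mp + 9 * L * Mp^2 + \<bar>c\<bar> * KF^2 * (Mp + 1)"

definition good where "good r1 \<gamma>1 \<longleftrightarrow> 0 < r1 \<and> r1 \<le> 1 \<and> r1 < \<delta> \<and> (MB + L) * r1 * (DD + 1) \<le> \<alpha> / 4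
   \<and> Mp * kk * (2 * L * Mp) * r1 \<le> 1/16 \<and> 0 \<le> \<gamma>1 \<and> \<gamma>1 \<le> Mp \<and> Mp * kk * MB * \<gamma>1 \<le> 1/16"

definition near where "near r1 \<gamma>1 x \<longleftrightarrow> norm (x - xs) \<le> r1 \<and> \<psi> (x - xs) \<noteq> 0
   \<and> norm (Q (x - xs)) \<le> \<gamma>1 * \<bar>\<psi> (x - xs)\<bar>"

lemma inv_good:
  assumes "good r1 \<gamma>1" "near r1 \<gamma>1 x"
  shows "norm v * \<bar>\<psi> (x - xs)\<bar> \<le> CI1 * norm (J x v)" "norm (Q v) \<le> CI2 * norm (J x v)"
  using inv_bound[of r1 \<gamma>1 x v] assms unfolding good_def near_def by auto

lemma step:
  assumes g: "good r1 \<gamma>1" and nx: "near r1 \<gamma>1 x"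
    and t: "norm (J x (y - x) + f x) \<le> c * (norm (f x))^2"
  shows "\<bar>\<psi> (y - xs) - \<psi> (x - xs) / 2\<bar> \<le> (C\<psi> * CI1 * KP c) * (norm (Q (x - xs)) + norm (x - xs) * \<bar>\<psi> (x - xs)\<bar>)"
    and "norm (Q (y - xs)) \<le> (CI2 * KP c * (Mp + 1) * C\<psi>^2) * (norm (x - xs))^2"
proof -
  define e where "e = x - xs"
  define s where "s = \<psi> e"
  define w where "w = Q e"
  define \<epsilon> where "\<epsilon> = norm e"
  define e' where "e' = y - xs"
  define v where "v = e' - (s/2) *\<^sub>R \<phi>"
  define tt where "tt = J x (y - x) + f x"
  have gg: "0 < r1" "r1 \<le> 1" "r1 < \<delta>" "0 \<le> \<gamma>1" "\<gamma>1 \<le> Mp" using g by (auto simp: good_def)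
  have ee: "e = s *\<^sub>R \<phi> + w" unfolding s_def w_def by (rule decomp)
  have s_nz: "s \<noteq> 0" using nx by (simp add: near_def s_def e_def)
  have w_le: "norm w \<le> \<gamma>1 * \<bar>s\<bar>" using nx by (simp add: near_def w_def s_def e_def)
  have eps_r1: "\<epsilon> \<le> r1" using nx by (simp add: near_def \<epsilon>_def e_def)
  have eps0: "0 \<le> \<epsilon>" by (simp add: \<epsilon>_def)
  have eps1: "\<epsilon> \<le> 1" using eps_r1 gg by simp
  have eps_le: "\<epsilon> \<le> 2 * Mp * \<bar>s\<bar>"
  proof -
    have "\<epsilon> \<le> norm (s *\<^sub>R \<phi>) + norm w" unfolding \<epsilon>_def ee by (rule norm_triangle_ineq)
    also have "\<dots> \<le> \<bar>s\<bar> * Mp + \<gamma>1 * \<bar>s\<bar>" using w_le by simp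
    also have "\<dots> \<le> 2 * Mp * \<bar>s\<bar>" using mult_right_mono[OF gg(5), of "\<bar>s\<bar>"] by (simp add: algebra_simps)
    finally show ?thesis .
  qed
  have s_le: "\<bar>s\<bar> \<le> C\<psi> * \<epsilon>" unfolding s_def \<epsilon>_def by (rule psi_le)
  have xb: "x \<in> ball xs \<delta>" using eps_r1 gg by (simp add: dist_norm norm_minus_commute \<epsilon>_def e_def)
  define R2 where "R2 = J x - J xs - H xs e"
  have R2n: "norm R2 \<le> L * \<epsilon>^2" unfolding R2_def \<epsilon>_def e_def by (rule T1[OF xb])
  define R3 where "R3 = f x - J xs e - (1/2) *\<^sub>R H xs e e"
  have R3n: "norm R3 \<le> L * \<epsilon>^3" unfolding R3_def \<epsilon>_def e_def by (rule T2[OF xb])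
  have Jv: "J x v = (J x e - f x - (s/2) *\<^sub>R J x \<phi>) + tt"
    by (simp add: v_def tt_def e'_def e_def blinfun.bilinear_simps algebra_simps)
  have Geq: "J x e - f x - (s/2) *\<^sub>R J x \<phi> = (1/2) *\<^sub>R H xs e w + R2 e - R3 - (s/2) *\<^sub>R R2 \<phi>"
  proof -
    have 1: "J x e = J xs e + H xs e e + R2 e" by (simp add: R2_def blinfun.bilinear_simps)
    have 2: "J x \<phi> = H xs e \<phi> + R2 \<phi>" by (simp add: R2_def blinfun.bilinear_simps A_phi)
    have 3: "f x = J xs e + (1/2) *\<^sub>R H xs e e + R3" by (simp add: R3_def)
    have 4: "H xs e w = H xs e e - s *\<^sub>R H xs e \<phi>"
      using ee by (simp add: eq_diff_eq[symmetric] blinfun.bilinear_simps)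
    have 5: "(1/2) *\<^sub>R z + (1/2) *\<^sub>R z = z" for z :: 'a
      by (subst scaleR_add_left[symmetric]) simp
    show ?thesis unfolding 1 2 3 4 by (simp add: algebra_simps 5)
  qed
  define P where "P = norm w + \<epsilon> * \<bar>s\<bar>"
  have P0: "P \<ge> 0" by (simp add: P_def eps0)
  have sabs: "\<bar>s\<bar> > 0" using s_nz by simp
  have e2: "\<epsilon>^2 \<le> \<epsilon> * (2 * Mp * \<bar>s\<bar>)"
    unfolding power2_eq_square by (rule mult_left_mono[OF eps_le eps0])
  have e3: "\<epsilon>^3 \<le> \<epsilon>^2" using eps0 eps1 by (simp add: power_decreasing)
  have B1: "norm (J x e - f x - (s/2) *\<^sub>R J x \<phi>) \<le> (1/2) * (MB * \<epsilon> * norm w) + L * \<epsilon>^3 + L * \<epsilon>^3 + (\<bar>s\<bar>/2) * (L * \<epsilon>^2 * Mp)"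
  proof -
    have n1: "norm ((1/2) *\<^sub>R H xs e w) \<le> (1/2) * (MB * \<epsilon> * norm w)"
      using norm_HH[of xs e w] by (simp add: \<epsilon>_def)
    have n2: "norm (R2 e) \<le> L * \<epsilon>^3"
    proof -
      have "norm (R2 e) \<le> norm R2 * \<epsilon>" unfolding \<epsilon>_def by (rule norm_blinfun)
      also have "\<dots> \<le> L * \<epsilon>^2 * \<epsilon>" by (rule mult_right_mono[OF R2n eps0])
      finally show ?thesis by (simp add: power3_eq_cube power2_eq_square mult_ac)
    qed
    have n3: "norm ((s/2) *\<^sub>R R2 \<phi>) \<le> (\<bar>s\<bar>/2) * (L * \<epsilon>^2 * Mp)"
    proof -
      have "norm (R2 \<phi>) \<le> L * \<epsilon>^2 * Mp" by (rule order_trans[OF norm_blinfun mult_right_mono[OF R2n]]) simp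
      then show ?thesis by (simp add: mult_left_mono)
    qed
    show ?thesis unfolding Geq
      using n1 n2 n3 R3n norm_triangle_ineq4 norm_triangle_ineq
      by (smt (verit, best))
  qed
  have B2: "norm (J x e - f x - (s/2) *\<^sub>R J x \<phi>) \<le> (MB * Mp + 9 * L * Mp^2) * P * \<bar>s\<bar>"
  proof -
    have a1: "(1/2) * (MB * \<epsilon> * norm w) \<le> MB * Mp * norm w * \<bar>s\<bar>"
    proof -
      have "(1/2) * (MB * \<epsilon> * norm w) \<le> (1/2) * (MB * (2 * Mp * \<bar>s\<bar>) * norm w)"
        using eps_le by (intro mult_left_mono mult_right_mono) auto
      then show ?thesis by (simp add: mult_ac)
    qed
    have a2: "L * \<epsilon>^3 \<le> 4 * L * Mp^2 * (\<epsilon> * \<bar>s\<bar>) * \<bar>s\<bar>"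
    proof -
      have "\<epsilon>^2 \<le> (2 * Mp * \<bar>s\<bar>)^2" using eps_le eps0 by (simp add: power_mono)
      then have "\<epsilon> * \<epsilon>^2 \<le> \<epsilon> * (2 * Mp * \<bar>s\<bar>)^2" by (rule mult_left_mono[OF _ eps0])
      then have "L * (\<epsilon> * \<epsilon>^2) \<le> L * (\<epsilon> * (2 * Mp * \<bar>s\<bar>)^2)" by (rule mult_left_mono[OF _ L_nn])
      then show ?thesis by (simp add: power2_eq_square power3_eq_cube mult_ac)
    qed
    have a3: "(\<bar>s\<bar>/2) * (L * \<epsilon>^2 * Mp) \<le> L * Mp^2 * (\<epsilon> * \<bar>s\<bar>) * \<bar>s\<bar>"
    proof -
      have "(\<bar>s\<bar>/2) * (L * \<epsilon>^2 * Mp) \<le> (\<bar>s\<bar>/2) * (L * (\<epsilon> * (2 * Mp * \<bar>s\<bar>)) * Mp)"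
        using e2 L_nn Mp_pos by (intro mult_left_mono mult_right_mono) auto
      then show ?thesis by (simp add: power2_eq_square mult_ac)
    qed
    have "norm (J x e - f x - (s/2) *\<^sub>R J x \<phi>) \<le> MB * Mp * norm w * \<bar>s\<bar> + 9 * L * Mp^2 * (\<epsilon> * \<bar>s\<bar>) * \<bar>s\<bar>"
      using B1 a1 a2 a3 by linarith
    also have "\<dots> \<le> (MB * Mp + 9 * L * Mp^2) * P * \<bar>s\<bar>"
    proof -
      have "MB * Mp * norm w + 9 * L * Mp^2 * (\<epsilon> * \<bar>s\<bar>) \<le> (MB * Mp + 9 * L * Mp^2) * P"
        using L_nn eps0 by (simp add: P_def algebra_simps)
      from mult_right_mono[OF this abs_ge_zero[of s]] show ?thesis by (simp add: algebra_simps)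
    qed
    finally show ?thesis .
  qed
  have B3: "norm (f x) \<le> KF * P"
  proof -
    have fx: "f x = J xs w + (1/2) *\<^sub>R H xs e e + R3"
      by (simp add: R3_def w_def A_Q)
    have "norm (f x) \<le> MA * norm w + (1/2) * (MB * \<epsilon> * \<epsilon>) + L * \<epsilon>^3"
    proof -
      have "norm (J xs w) \<le> MA * norm w" by (rule norm_blinfun)
      moreover have "norm ((1/2) *\<^sub>R H xs e e) \<le> (1/2) * (MB * \<epsilon> * \<epsilon>)"
        using norm_HH[of xs e e] by (simp add: \<epsilon>_def)
      ultimately show ?thesis unfolding fx using R3n norm_triangle_ineq by (smt (verit, best))
    qed
    also have "\<dots> \<le> MA * norm w + (MB / 2 + L) * \<epsilon>^2"
      using e3 L_nn by (simp add: power2_eq_square algebra_simps mult_left_mono)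
    also have "\<dots> \<le> MA * norm w + (MB / 2 + L) * (\<epsilon> * (2 * Mp * \<bar>s\<bar>))"
      using e2 L_nn by (simp add: mult_left_mono)
    also have "\<dots> = MA * norm w + ((MB / 2 + L) * (2 * Mp)) * (\<epsilon> * \<bar>s\<bar>)" by (simp add: mult_ac)
    also have "\<dots> \<le> KF * P"
      using L_nn eps0 by (simp add: P_def algebra_simps)
    finally show ?thesis .
  qed
  have Ple: "P \<le> (Mp + 1) * \<bar>s\<bar>"
  proof -
    have "\<epsilon> * \<bar>s\<bar> \<le> 1 * \<bar>s\<bar>" using eps1 by (intro mult_right_mono) auto
    then show ?thesis using w_le mult_right_mono[OF gg(5), of "\<bar>s\<bar>"] by (simp add: P_def algebra_simps)
  qed
  have B4: "norm tt \<le> \<bar>c\<bar> * KF^2 * (Mp + 1) * P * \<bar>s\<bar>"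
  proof -
    have "norm tt \<le> \<bar>c\<bar> * (norm (f x))^2"
      using t by (simp add: tt_def) (smt (verit, best) abs_ge_self mult_right_mono zero_le_power2)
    also have "\<dots> \<le> \<bar>c\<bar> * (KF * P)^2"
      using B3 by (intro mult_left_mono power_mono) auto
    also have "\<dots> = \<bar>c\<bar> * KF^2 * (P * P)" by (simp add: power2_eq_square mult_ac)
    also have "\<dots> \<le> \<bar>c\<bar> * KF^2 * (P * ((Mp + 1) * \<bar>s\<bar>))"
      using Ple P0 by (intro mult_left_mono) auto
    finally show ?thesis by (simp add: mult_ac)
  qed
  have B5: "norm (J x v) \<le> KP c * P * \<bar>s\<bar>"
  proof -
    have "norm (J x v) \<le> norm (J x e - f x - (s/2) *\<^sub>R J x \<phi>) + norm tt"
      unfolding Jv by (rule norm_triangle_ineq)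
    also have "\<dots> \<le> (MB * Mp + 9 * L * Mp^2) * P * \<bar>s\<bar> + \<bar>c\<bar> * KF^2 * (Mp + 1) * P * \<bar>s\<bar>"
      using B2 B4 by linarith
    also have "\<dots> = KP c * P * \<bar>s\<bar>" by (simp add: KP_def algebra_simps)
    finally show ?thesis .
  qed
  have psiv: "\<psi> v = \<psi> (y - xs) - \<psi> (x - xs) / 2"
    by (simp add: v_def psi_diff psi_scale psi_phi e'_def s_def e_def)
  have Qv: "Q v = Q (y - xs)"
    by (simp add: v_def Q_lin Q_phi e'_def)
  have I1: "norm v * \<bar>s\<bar> \<le> CI1 * norm (J x v)"
    using inv_good(1)[OF g nx, of v] by (simp add: s_def e_def)
  have I2: "norm (Q v) \<le> CI2 * norm (J x v)"
    using inv_good(2)[OF g nx, of v] .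
  have CI1_0: "CI1 \<ge> 0" using Cpsi_pos alpha_pos DD0 by simp
  have CI2_0: "CI2 \<ge> 0" using Cpsi_pos alpha_pos DD0 L_nn CI1_0 by simp
  have "\<bar>\<psi> v\<bar> * \<bar>s\<bar> \<le> (C\<psi> * norm v) * \<bar>s\<bar>" by (rule mult_right_mono[OF psi_le]) simp
  also have "\<dots> \<le> C\<psi> * (CI1 * (KP c * P * \<bar>s\<bar>))"
    using I1 B5 CI1_0 Cpsi_pos
    by (simp add: mult.assoc) (meson mult_left_mono order_trans less_imp_le)
  finally have "\<bar>\<psi> v\<bar> * \<bar>s\<bar> \<le> ((C\<psi> * CI1 * KP c) * P) * \<bar>s\<bar>" by (simp add: mult_ac)
  then have "\<bar>\<psi> v\<bar> \<le> (C\<psi> * CI1 * KP c) * P" using sabs by simp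
  then show "\<bar>\<psi> (y - xs) - \<psi> (x - xs) / 2\<bar> \<le> (C\<psi> * CI1 * KP c) * (norm (Q (x - xs)) + norm (x - xs) * \<bar>\<psi> (x - xs)\<bar>)"
    by (simp add: psiv P_def w_def \<epsilon>_def s_def e_def)
  have KP0: "KP c \<ge> 0" using L_nn by (simp add: KP_def)
  have "norm (Q (y - xs)) \<le> CI2 * (KP c * P * \<bar>s\<bar>)"
    using I2 B5 CI2_0 unfolding Qv by (meson mult_left_mono order_trans)
  also have "\<dots> \<le> CI2 * (KP c * ((Mp + 1) * \<bar>s\<bar>) * \<bar>s\<bar>)"
    using Ple CI2_0 KP0 by (intro mult_left_mono mult_right_mono) auto
  also have "\<dots> = (CI2 * KP c * (Mp + 1)) * \<bar>s\<bar>^2" by (simp add: power2_eq_square mult_ac)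
  also have "\<dots> \<le> (CI2 * KP c * (Mp + 1)) * (C\<psi> * \<epsilon>)^2"
  proof (rule mult_left_mono[OF power_mono])
    show "0 \<le> CI2 * KP c * (Mp + 1)"
      by (intro mult_nonneg_nonneg CI2_0 KP0) (use Mp_pos in simp)
  qed (use s_le in auto)
  finally show "norm (Q (y - xs)) \<le> (CI2 * KP c * (Mp + 1) * C\<psi>^2) * (norm (x - xs))^2"
    by (simp add: \<epsilon>_def e_def power_mult_distrib mult_ac)
qed

lemma bij_J:
  assumes g: "good r1 \<gamma>1" and nx: "near r1 \<gamma>1 x"
  shows "bij (blinfun_apply (J x))"
proof (rule bijI)
  have s0: "\<bar>\<psi> (x - xs)\<bar> > 0" using nx by (simp add: near_def)
  show i: "inj (blinfun_apply (J x))"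
  proof (rule injI)
    fix a b assume "J x a = J x b"
    then have "J x (a - b) = 0" by (simp add: blinfun.bilinear_simps)
    then have "norm (a - b) * \<bar>\<psi> (x - xs)\<bar> \<le> 0" using inv_good(1)[OF g nx, of "a - b"] by simp
    then have "norm (a - b) \<le> 0" using s0 by (simp add: mult_le_0_iff)
    then show "a = b" by simp
  qed
  then show "surj (blinfun_apply (J x))"
    using blinfun.bounded_linear_right bounded_linear_def linear_inj_imp_surj by blast
qed

definition "KA c = C\<psi> * CI1 * KP c"
definition "KB c = CI2 * KP c * (Mp + 1) * C\<psi>^2"

lemma KA0: "KA c \<ge> 0"
  using Cpsi_pos alpha_pos DD0 L_nn by (simp add: KA_def KP_def)
lemma KB0: "KB c \<ge> 0"
proof -
  have "CI1 \<ge> 0" using Cpsi_pos alpha_pos DD0 by simp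
  then have "CI2 \<ge> 0" using alpha_pos L_nn by simp
  moreover have "KP c \<ge> 0" using L_nn by (simp add: KP_def)
  ultimately show ?thesis unfolding KB_def by (intro mult_nonneg_nonneg) auto
qed

definition "params r1 \<gamma>1 g \<rho>0 c \<longleftrightarrow> good r1 \<gamma>1 \<and> 0 < g \<and> g \<le> \<gamma>1 \<and> g \<le> Mp / 8 \<and> 0 < \<rho>0 \<and> \<rho>0 \<le> r1
   \<and> KA c * (g + \<rho>0) \<le> 1/8 \<and> KB c * \<rho>0 \<le> 1/16 \<and> 16 * Mp * (KB c * \<rho>0) \<le> 3 * g"

lemma step2:
  assumes p: "params r1 \<gamma>1 g \<rho>0 c"
    and x: "norm (x - xs) \<le> \<rho>0" "\<psi> (x - xs) \<noteq> 0" "norm (Q (x - xs)) \<le> g * \<bar>\<psi> (x - xs)\<bar>"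
    and t: "norm (J x (y - x) + f x) \<le> c * (norm (f x))^2"
  shows "norm (y - xs) \<le> (6/7) * norm (x - xs)" "\<psi> (y - xs) \<noteq> 0"
    "norm (Q (y - xs)) \<le> g * \<bar>\<psi> (y - xs)\<bar>"
    "\<bar>\<psi> (y - xs)\<bar> \<ge> (3/8) * \<bar>\<psi> (x - xs)\<bar>"
    "\<bar>\<psi> (y - xs) - \<psi> (x - xs) / 2\<bar> \<le> KA c * (norm (Q (x - xs)) + norm (x - xs) * \<bar>\<psi> (x - xs)\<bar>)"
    "norm (Q (y - xs)) \<le> KB c * (norm (x - xs))^2"
    "norm (x - xs) \<le> 2 * Mp * \<bar>\<psi> (x - xs)\<bar>"
proof -
  define s where "s = \<psi> (x - xs)"
  define w where "w = Q (x - xs)"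
  define \<epsilon> where "\<epsilon> = norm (x - xs)"
  define s' where "s' = \<psi> (y - xs)"
  define w' where "w' = Q (y - xs)"
  define \<epsilon>' where "\<epsilon>' = norm (y - xs)"
  have pp: "good r1 \<gamma>1" "0 < g" "g \<le> \<gamma>1" "g \<le> Mp / 8" "0 < \<rho>0" "\<rho>0 \<le> r1"
     "KA c * (g + \<rho>0) \<le> 1/8" "KB c * \<rho>0 \<le> 1/16" "16 * Mp * (KB c * \<rho>0) \<le> 3 * g"
    using p by (auto simp: params_def)
  have "norm (Q (x - xs)) \<le> \<gamma>1 * \<bar>\<psi> (x - xs)\<bar>"
    using x(3) mult_right_mono[OF pp(3) abs_ge_zero[of "\<psi> (x - xs)"]] by linarith
  then have nx: "near r1 \<gamma>1 x" unfolding near_def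
    using x pp by auto
  have a: "\<bar>s' - s / 2\<bar> \<le> KA c * (norm w + \<epsilon> * \<bar>s\<bar>)"
    using step(1)[OF pp(1) nx t] by (simp add: KA_def s'_def s_def w_def \<epsilon>_def)
  have b: "norm w' \<le> KB c * \<epsilon>^2"
    using step(2)[OF pp(1) nx t] by (simp add: KB_def w'_def \<epsilon>_def)
  have sabs: "\<bar>s\<bar> > 0" using x by (simp add: s_def)
  have eps0: "\<epsilon> \<ge> 0" by (simp add: \<epsilon>_def)
  have w_le: "norm w \<le> g * \<bar>s\<bar>" using x by (simp add: w_def s_def)
  have eps_rho: "\<epsilon> \<le> \<rho>0" using x by (simp add: \<epsilon>_def)
  have ee: "x - xs = s *\<^sub>R \<phi> + w" unfolding s_def w_def by (rule decomp)
  have ee': "y - xs = s' *\<^sub>R \<phi> + w'" unfolding s'_def w'_def by (rule decomp)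
  have epsle: "\<epsilon> \<le> 2 * Mp * \<bar>s\<bar>"
  proof -
    have "\<epsilon> \<le> norm (s *\<^sub>R \<phi>) + norm w" unfolding \<epsilon>_def ee by (rule norm_triangle_ineq)
    also have "\<dots> \<le> \<bar>s\<bar> * Mp + (Mp / 8) * \<bar>s\<bar>"
      using w_le mult_right_mono[OF pp(4) abs_ge_zero[of s]] norm_scaleR[of s \<phi>] by linarith
    finally have "\<epsilon> \<le> \<bar>s\<bar> * Mp + (Mp / 8) * \<bar>s\<bar>" .
    moreover have "(Mp / 8) * \<bar>s\<bar> = (1/8) * (\<bar>s\<bar> * Mp)" "2 * Mp * \<bar>s\<bar> = 2 * (\<bar>s\<bar> * Mp)" by simp_all
    moreover have "0 \<le> \<bar>s\<bar> * Mp" by simp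
    ultimately show ?thesis by linarith
  qed
  then show "norm (x - xs) \<le> 2 * Mp * \<bar>\<psi> (x - xs)\<bar>" by (simp add: \<epsilon>_def s_def)
  have sMp: "\<bar>s\<bar> * Mp \<le> (8/7) * \<epsilon>"
  proof -
    have "norm (s *\<^sub>R \<phi>) \<le> \<epsilon> + norm w"
      using norm_triangle_ineq4[of "x - xs" w] ee by (simp add: \<epsilon>_def)
    then have "\<bar>s\<bar> * Mp \<le> \<epsilon> + (Mp / 8) * \<bar>s\<bar>"
      using w_le mult_right_mono[OF pp(4) abs_ge_zero[of s]] norm_scaleR[of s \<phi>] by linarith
    then show ?thesis by (simp add: algebra_simps)
  qed
  have a2: "\<bar>s' - s / 2\<bar> \<le> \<bar>s\<bar> / 8"
  proof -
    have "norm w + \<epsilon> * \<bar>s\<bar> \<le> (g + \<rho>0) * \<bar>s\<bar>"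
      using w_le mult_right_mono[OF eps_rho abs_ge_zero[of s]] by (simp add: algebra_simps)
    then have "KA c * (norm w + \<epsilon> * \<bar>s\<bar>) \<le> KA c * ((g + \<rho>0) * \<bar>s\<bar>)" by (rule mult_left_mono[OF _ KA0])
    also have "\<dots> = (KA c * (g + \<rho>0)) * \<bar>s\<bar>" by simp
    also have "\<dots> \<le> (1/8) * \<bar>s\<bar>" by (rule mult_right_mono[OF pp(7)]) simp
    finally show ?thesis using a by simp
  qed
  have s'lo: "\<bar>s'\<bar> \<ge> (3/8) * \<bar>s\<bar>" using a2 by linarith
  have s'hi: "\<bar>s'\<bar> \<le> (5/8) * \<bar>s\<bar>" using a2 by linarith
  have bw: "norm w' \<le> \<epsilon> / 16 \<and> norm w' \<le> (3 * g / (16 * Mp)) * \<epsilon>"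
  proof -
    have "KB c * \<epsilon>^2 \<le> (KB c * \<rho>0) * \<epsilon>"
      unfolding power2_eq_square using eps_rho eps0 KB0
      by (metis mult.assoc mult.commute mult_right_mono mult_left_mono)
    moreover have "(KB c * \<rho>0) * \<epsilon> \<le> (1/16) * \<epsilon>" by (rule mult_right_mono[OF pp(8) eps0])
    moreover have "KB c * \<rho>0 \<le> 3 * g / (16 * Mp)" using pp(9) Mp_pos by (simp add: field_simps)
    then have "(KB c * \<rho>0) * \<epsilon> \<le> (3 * g / (16 * Mp)) * \<epsilon>" by (rule mult_right_mono[OF _ eps0])
    ultimately show ?thesis using b by linarith
  qed
  have "\<epsilon>' \<le> \<bar>s'\<bar> * Mp + norm w'" unfolding \<epsilon>'_def ee' using norm_triangle_ineq[of "s' *\<^sub>R \<phi>" w'] by simp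
  also have "\<bar>s'\<bar> * Mp \<le> (5/8) * \<bar>s\<bar> * Mp" using s'hi Mp_pos by (simp add: mult_right_mono)
  finally have "\<epsilon>' \<le> (5/8) * (\<bar>s\<bar> * Mp) + \<epsilon> / 16" using bw by simp
  then have "\<epsilon>' \<le> (6/7) * \<epsilon>" using sMp eps0 by linarith
  then show "norm (y - xs) \<le> (6/7) * norm (x - xs)" by (simp add: \<epsilon>'_def \<epsilon>_def)
  show "\<psi> (y - xs) \<noteq> 0" using s'lo sabs by (simp add: s'_def) 
  have "norm w' \<le> (3 * g / (16 * Mp)) * \<epsilon>" using bw by blast
  also have "\<dots> \<le> (3 * g / (16 * Mp)) * (2 * Mp * \<bar>s\<bar>)"
    by (rule mult_left_mono[OF epsle]) (use pp(2) Mp_pos in simp)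
  also have "\<dots> = g * ((3/8) * \<bar>s\<bar>)" using Mp_pos by (simp add: field_simps)
  also have "\<dots> \<le> g * \<bar>s'\<bar>" using s'lo pp(2) by (simp add: mult_left_mono)
  finally show "norm (Q (y - xs)) \<le> g * \<bar>\<psi> (y - xs)\<bar>" by (simp add: w'_def s'_def)
  show "\<bar>\<psi> (y - xs)\<bar> \<ge> (3/8) * \<bar>\<psi> (x - xs)\<bar>" using s'lo by (simp add: s'_def s_def)
  show "\<bar>\<psi> (y - xs) - \<psi> (x - xs) / 2\<bar> \<le> KA c * (norm (Q (x - xs)) + norm (x - xs) * \<bar>\<psi> (x - xs)\<bar>)"
    using a by (simp add: s'_def s_def w_def \<epsilon>_def)
  show "norm (Q (y - xs)) \<le> KB c * (norm (x - xs))^2" using b by (simp add: w'_def \<epsilon>_def)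
qed

lemma ratio_ineq:
  fixes a b :: real assumes "b \<noteq> 0"
  shows "\<bar>\<bar>a\<bar> / \<bar>b\<bar> - 1/2\<bar> \<le> \<bar>a - b / 2\<bar> / \<bar>b\<bar>"
proof -
  have "\<bar>a\<bar> / \<bar>b\<bar> - 1/2 = (\<bar>a\<bar> - \<bar>b / 2\<bar>) / \<bar>b\<bar>" using assms by (simp add: field_simps)
  then have "\<bar>\<bar>a\<bar> / \<bar>b\<bar> - 1/2\<bar> = \<bar>\<bar>a\<bar> - \<bar>b / 2\<bar>\<bar> / \<bar>b\<bar>" by simp
  also have "\<dots> \<le> \<bar>a - b / 2\<bar> / \<bar>b\<bar>" by (rule divide_right_mono[OF abs_triangle_ineq3]) simp
  finally show ?thesis .
qed

lemma iterate:
  assumes p: "params r1 \<gamma>1 g \<rho>0 c"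
    and x0: "norm (x 0 - xs) \<le> \<rho>0" "\<psi> (x 0 - xs) \<noteq> 0" "norm (Q (x 0 - xs)) \<le> g * \<bar>\<psi> (x 0 - xs)\<bar>"
    and T: "\<And>j. x j \<in> ball xs \<delta> \<Longrightarrow> norm (J (x j) (x (Suc j) - x j) + f (x j)) \<le> c * (norm (f (x j)))^2"
  shows "x \<longlonglongrightarrow> xs"
    and "\<exists>K1>0. \<forall>j. norm (Q (x (Suc j) - xs)) \<le> K1 * (norm (x j - xs))^2"
    and "(\<lambda>j. \<bar>\<psi> (x (Suc j) - xs)\<bar> / \<bar>\<psi> (x j - xs)\<bar>) \<longlonglongrightarrow> 1/2"
proof -
  define \<epsilon>0 where "\<epsilon>0 = norm (x 0 - xs)"
  have pp: "good r1 \<gamma>1" "\<rho>0 \<le> r1" using p by (auto simp: params_def)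
  have r1d: "r1 < \<delta>" using pp(1) by (simp add: good_def)
  have inv: "norm (x j - xs) \<le> (6/7)^j * \<epsilon>0 \<and> \<psi> (x j - xs) \<noteq> 0 \<and> norm (Q (x j - xs)) \<le> g * \<bar>\<psi> (x j - xs)\<bar>" for j
  proof (induction j)
    case 0 then show ?case using x0 by (simp add: \<epsilon>0_def)
  next
    case (Suc j)
    have "(6/7::real)^j \<le> 1" by (simp add: power_le_one)
    then have "norm (x j - xs) \<le> \<epsilon>0" using Suc.IH \<epsilon>0_def
      by (meson mult_left_le_one_le norm_ge_zero order_trans zero_le_divide_iff zero_le_numeral zero_le_power)
    then have xr: "norm (x j - xs) \<le> \<rho>0" using x0 by (simp add: \<epsilon>0_def)
    then have "x j \<in> ball xs \<delta>" using pp r1d by (simp add: dist_norm norm_minus_commute)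
    note S = step2[OF p xr _ _ T[OF this]]
    have "norm (x (Suc j) - xs) \<le> (6/7) * ((6/7)^j * \<epsilon>0)"
      using S(1) Suc.IH by (meson mult_left_mono order_trans zero_le_divide_iff zero_le_numeral)
    then show ?case using S(2,3) Suc.IH by simp
  qed
  have xr: "norm (x j - xs) \<le> \<rho>0" for j
  proof -
    have "(6/7::real)^j \<le> 1" by (simp add: power_le_one)
    then have "norm (x j - xs) \<le> \<epsilon>0" using inv[of j] \<epsilon>0_def
      by (meson mult_left_le_one_le norm_ge_zero order_trans zero_le_divide_iff zero_le_numeral zero_le_power)
    then show ?thesis using x0 by (simp add: \<epsilon>0_def)
  qed
  have xb: "x j \<in> ball xs \<delta>" for j using xr[of j] pp r1d by (simp add: dist_norm norm_minus_commute)
  have S1: "norm (x (Suc j) - xs) \<le> (6/7) * norm (x j - xs)"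
    and S4: "\<bar>\<psi> (x (Suc j) - xs)\<bar> \<ge> (3/8) * \<bar>\<psi> (x j - xs)\<bar>"
    and S5: "\<bar>\<psi> (x (Suc j) - xs) - \<psi> (x j - xs) / 2\<bar> \<le> KA c * (norm (Q (x j - xs)) + norm (x j - xs) * \<bar>\<psi> (x j - xs)\<bar>)"
    and S6: "norm (Q (x (Suc j) - xs)) \<le> KB c * (norm (x j - xs))^2"
    and S7: "norm (x j - xs) \<le> 2 * Mp * \<bar>\<psi> (x j - xs)\<bar>" for j
    using step2[OF p xr[of j] conjunct1[OF conjunct2[OF inv[of j]]] conjunct2[OF conjunct2[OF inv[of j]]] T[OF xb[of j]]]
    by auto
  have geo: "(\<lambda>j. C * ((6/7::real)^j * \<epsilon>0)) \<longlonglongrightarrow> 0" for C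
    by (auto intro!: tendsto_mult_right_zero tendsto_mult_left_zero LIMSEQ_power_zero)
  show "x \<longlonglongrightarrow> xs"
  proof (rule LIM_zero_cancel, rule Lim_null_comparison)
    show "\<forall>\<^sub>F j in sequentially. norm (x j - xs) \<le> 1 * ((6/7)^j * \<epsilon>0)"
      using inv by simp
  qed (rule geo)
  show "\<exists>K1>0. \<forall>j. norm (Q (x (Suc j) - xs)) \<le> K1 * (norm (x j - xs))^2"
  proof (intro exI[of _ "KB c + 1"] conjI allI)
    show "KB c + 1 > 0" using KB0[of c] by simp
    fix j
    show "norm (Q (x (Suc j) - xs)) \<le> (KB c + 1) * (norm (x j - xs))^2"
      using S6[of j] by (simp add: algebra_simps) (smt (verit) zero_le_power2)
  qed
  define C where "C = KA c * ((16/3) * Mp * KB c + 1)"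
  show "(\<lambda>j. \<bar>\<psi> (x (Suc j) - xs)\<bar> / \<bar>\<psi> (x j - xs)\<bar>) \<longlonglongrightarrow> 1/2"
  proof (subst filterlim_sequentially_Suc[symmetric], rule LIM_zero_cancel, rule Lim_null_comparison)
    show "(\<lambda>j. C * ((6/7::real)^j * \<epsilon>0)) \<longlonglongrightarrow> 0" by (rule geo)
    show "\<forall>\<^sub>F j in sequentially. norm (\<bar>\<psi> (x (Suc (Suc j)) - xs)\<bar> / \<bar>\<psi> (x (Suc j) - xs)\<bar> - 1/2) \<le> C * ((6/7)^j * \<epsilon>0)"
    proof (rule always_eventually, rule allI)
      fix i
      define s where "s = \<psi> (x i - xs)"
      define s1 where "s1 = \<psi> (x (Suc i) - xs)"
      define s2 where "s2 = \<psi> (x (Suc (Suc i)) - xs)"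
      define \<epsilon> where "\<epsilon> = norm (x i - xs)"
      define \<epsilon>1 where "\<epsilon>1 = norm (x (Suc i) - xs)"
      define w1 where "w1 = norm (Q (x (Suc i) - xs))"
      have s_nz: "s \<noteq> 0" "s1 \<noteq> 0" using inv[of i] inv[of "Suc i"] by (simp_all add: s_def s1_def)
      have r1: "\<bar>\<bar>s2\<bar> / \<bar>s1\<bar> - 1/2\<bar> \<le> \<bar>s2 - s1 / 2\<bar> / \<bar>s1\<bar>" by (rule ratio_ineq[OF s_nz(2)])
      have "\<bar>s2 - s1 / 2\<bar> \<le> KA c * (w1 + \<epsilon>1 * \<bar>s1\<bar>)" using S5[of "Suc i"] by (simp add: s2_def s1_def w1_def \<epsilon>1_def)
      then have r2: "\<bar>s2 - s1 / 2\<bar> / \<bar>s1\<bar> \<le> KA c * (w1 / \<bar>s1\<bar> + \<epsilon>1)"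
        using s_nz by (simp add: divide_right_mono field_simps)
      have "w1 \<le> KB c * \<epsilon>^2" using S6[of i] by (simp add: w1_def \<epsilon>_def)
      also have "\<dots> \<le> KB c * (\<epsilon> * (2 * Mp * \<bar>s\<bar>))"
        using S7[of i] KB0[of c] by (simp add: power2_eq_square \<epsilon>_def s_def mult_left_mono)
      also have "\<dots> \<le> KB c * (\<epsilon> * (2 * Mp * ((8/3) * \<bar>s1\<bar>)))"
        using S4[of i] KB0[of c] Mp_pos by (intro mult_left_mono) (auto simp: \<epsilon>_def s_def s1_def)
      finally have "w1 / \<bar>s1\<bar> \<le> (16/3) * Mp * KB c * \<epsilon>" using s_nz by (simp add: field_simps)
      moreover have "\<epsilon>1 \<le> \<epsilon>" unfolding \<epsilon>1_def \<epsilon>_def using S1[of i] norm_ge_zero[of "x i - xs"] by linarith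
      moreover have "((16/3) * Mp * KB c + 1) * \<epsilon> = (16/3) * Mp * KB c * \<epsilon> + \<epsilon>" by (simp add: algebra_simps)
      ultimately have "w1 / \<bar>s1\<bar> + \<epsilon>1 \<le> ((16/3) * Mp * KB c + 1) * \<epsilon>" by linarith
      then have "KA c * (w1 / \<bar>s1\<bar> + \<epsilon>1) \<le> KA c * (((16/3) * Mp * KB c + 1) * \<epsilon>)"
        by (rule mult_left_mono[OF _ KA0])
      also have "\<dots> \<le> KA c * (((16/3) * Mp * KB c + 1) * ((6/7)^i * \<epsilon>0))"
        using inv[of i] KA0[of c] KB0[of c] Mp_pos by (intro mult_left_mono) (auto simp: \<epsilon>_def)
      finally show "norm (\<bar>\<psi> (x (Suc (Suc i)) - xs)\<bar> / \<bar>\<psi> (x (Suc i) - xs)\<bar> - 1/2) \<le> C * ((6/7)^i * \<epsilon>0)"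
        using r1 r2 by (simp add: C_def s1_def s2_def mult_ac)
    qed
  qed
qed

lemma small_le: "0 \<le> (K::real) \<Longrightarrow> 0 < b \<Longrightarrow> 0 \<le> r \<Longrightarrow> r \<le> b / (K + 1) \<Longrightarrow> K * r \<le> b"
proof -
  assume a: "0 \<le> K" "0 < b" "0 \<le> r" "r \<le> b / (K + 1)"
  have "K * r \<le> K * (b / (K + 1))" using a by (intro mult_left_mono) auto
  also have "\<dots> \<le> b" using a by (simp add: field_simps)
  finally show ?thesis .
qed

lemma exists_params: "\<exists>r1 \<gamma>1 g \<rho>0. params r1 \<gamma>1 g \<rho>0 c"
proof -
  define K1 where "K1 = (MB + L) * (DD + 1)"
  define K2 where "K2 = Mp * kk * (2 * L * Mp)"
  define K3 where "K3 = Mp * kk * MB"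
  have K0: "K1 \<ge> 0" "K2 \<ge> 0" "K3 \<ge> 0" using L_nn DD0 Cpsi_pos by (simp_all add: K1_def K2_def K3_def)
  define r1 where "r1 = min (min 1 (\<delta>/2)) (min ((\<alpha>/4) / (K1 + 1)) ((1/16) / (K2 + 1)))"
  define \<gamma>1 where "\<gamma>1 = min Mp ((1/16) / (K3 + 1))"
  have r1p: "r1 > 0" using delta_pos alpha_pos K0 by (simp add: r1_def)
  have g1p: "\<gamma>1 > 0" using Mp_pos K0 by (simp add: \<gamma>1_def)
  have good: "good r1 \<gamma>1"
    unfolding good_def
  proof (intro conjI)
    show "0 < r1" by (fact r1p)
    show "r1 \<le> 1" "r1 < \<delta>" using delta_pos by (auto simp: r1_def)
    have "K1 * r1 \<le> \<alpha>/4" by (rule small_le) (use K0 alpha_pos r1p in \<open>auto simp: r1_def\<close>)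
    then show "(MB + L) * r1 * (DD + 1) \<le> \<alpha> / 4" by (simp add: K1_def mult_ac)
    have "K2 * r1 \<le> 1/16" by (rule small_le) (use K0 r1p in \<open>auto simp: r1_def\<close>)
    then show "Mp * kk * (2 * L * Mp) * r1 \<le> 1/16" by (simp add: K2_def)
    show "0 \<le> \<gamma>1" "\<gamma>1 \<le> Mp" using g1p by (auto simp: \<gamma>1_def)
    have "K3 * \<gamma>1 \<le> 1/16" by (rule small_le) (use K0 g1p in \<open>auto simp: \<gamma>1_def\<close>)
    then show "Mp * kk * MB * \<gamma>1 \<le> 1/16" by (simp add: K3_def)
  qed
  define g where "g = min \<gamma>1 (min (Mp / 8) ((1/16) / (KA c + 1)))"
  have gp: "g > 0" using g1p Mp_pos KA0[of c] by (simp add: g_def)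
  define \<rho>0 where "\<rho>0 = min r1 (min ((1/16) / (KA c + 1)) (min ((1/16) / (KB c + 1)) ((3 * g / (16 * Mp)) / (KB c + 1))))"
  have rp: "\<rho>0 > 0" using r1p gp Mp_pos KA0[of c] KB0[of c] by (simp add: \<rho>0_def)
  have "params r1 \<gamma>1 g \<rho>0 c"
    unfolding params_def
  proof (intro conjI good gp rp)
    show "g \<le> \<gamma>1" "g \<le> Mp / 8" "\<rho>0 \<le> r1" by (auto simp: g_def \<rho>0_def)
    have "KA c * g \<le> 1/16" by (rule small_le) (use KA0[of c] gp in \<open>auto simp: g_def\<close>)
    moreover have "KA c * \<rho>0 \<le> 1/16" by (rule small_le) (use KA0[of c] rp in \<open>auto simp: \<rho>0_def\<close>)
    ultimately show "KA c * (g + \<rho>0) \<le> 1/8" by (simp add: algebra_simps)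
    show "KB c * \<rho>0 \<le> 1/16" by (rule small_le) (use KB0[of c] rp in \<open>auto simp: \<rho>0_def\<close>)
    have "KB c * \<rho>0 \<le> 3 * g / (16 * Mp)"
      by (rule small_le) (use KB0[of c] rp gp Mp_pos in \<open>auto simp: \<rho>0_def\<close>)
    then show "16 * Mp * (KB c * \<rho>0) \<le> 3 * g" using Mp_pos by (simp add: field_simps)
  qed
  then show ?thesis by blast
qed

definition "Wr \<rho> \<gamma> = {x. 0 < norm (x - xs) \<and> norm (x - xs) < \<rho> \<and> norm (Q (x - xs)) \<le> \<gamma> * (\<bar>\<psi> (x - xs)\<bar> * Mp)}"

lemma final:
  "\<exists>\<rho>0>0. \<exists>\<gamma>0>0. \<forall>\<rho> \<gamma>. 0 < \<rho> \<and> \<rho> \<le> \<rho>0 \<and> 0 < \<gamma> \<and> \<gamma> \<le> \<gamma>0 \<longrightarrow>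
     (\<forall>x0 \<in> Wr \<rho> \<gamma>. bij (blinfun_apply (J x0))) \<and>
     (\<forall>x. x 0 \<in> Wr \<rho> \<gamma> \<and>
        (\<forall>j. x j \<in> ball xs \<delta> \<longrightarrow> norm (J (x j) (x (Suc j) - x j) + f (x j)) \<le> c * (norm (f (x j)))^2)
      \<longrightarrow> x \<longlonglongrightarrow> xs \<and>
          (\<exists>K1>0. \<forall>j. norm (Q (x (Suc j) - xs)) \<le> K1 * (norm (x j - xs))^2) \<and>
          (\<lambda>j. (\<bar>\<psi> (x (Suc j) - xs)\<bar> * Mp) / (\<bar>\<psi> (x j - xs)\<bar> * Mp)) \<longlonglongrightarrow> 1/2)"
proof -
  obtain r1 \<gamma>1 g \<rho>0 where p: "params r1 \<gamma>1 g \<rho>0 c" using exists_params by blast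
  have pp: "good r1 \<gamma>1" "0 < g" "g \<le> \<gamma>1" "0 < \<rho>0" "\<rho>0 \<le> r1" using p by (auto simp: params_def)
  have inW: "norm (x - xs) \<le> \<rho>0 \<and> \<psi> (x - xs) \<noteq> 0 \<and> norm (Q (x - xs)) \<le> g * \<bar>\<psi> (x - xs)\<bar>"
    if "x \<in> Wr \<rho> \<gamma>" "\<rho> \<le> \<rho>0" "0 < \<gamma>" "\<gamma> \<le> g / Mp" for x \<rho> \<gamma>
  proof -
    have a: "0 < norm (x - xs)" "norm (x - xs) < \<rho>" "norm (Q (x - xs)) \<le> \<gamma> * (\<bar>\<psi> (x - xs)\<bar> * Mp)"
      using that by (auto simp: Wr_def)
    have "\<gamma> * Mp \<le> g" using that Mp_pos by (simp add: field_simps)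
    then have "\<gamma> * (\<bar>\<psi> (x - xs)\<bar> * Mp) \<le> g * \<bar>\<psi> (x - xs)\<bar>"
      using mult_right_mono[of "\<gamma> * Mp" g "\<bar>\<psi> (x - xs)\<bar>"] by (simp add: mult_ac)
    then have q: "norm (Q (x - xs)) \<le> g * \<bar>\<psi> (x - xs)\<bar>" using a by linarith
    have "\<psi> (x - xs) \<noteq> 0"
    proof
      assume h: "\<psi> (x - xs) = 0"
      then have "Q (x - xs) = 0" using q by simp
      then have "x - xs = 0" using decomp[of "x - xs"] h by simp
      then show False using a by simp
    qed
    then show ?thesis using q a that by simp
  qed
  have bijpart: "bij (blinfun_apply (J x0))" if "x0 \<in> Wr \<rho> \<gamma>" "\<rho> \<le> \<rho>0" "0 < \<gamma>" "\<gamma> \<le> g / Mp" for x0 \<rho> \<gamma>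
  proof -
    have h: "norm (x0 - xs) \<le> \<rho>0 \<and> \<psi> (x0 - xs) \<noteq> 0 \<and> norm (Q (x0 - xs)) \<le> g * \<bar>\<psi> (x0 - xs)\<bar>"
      using inW that by blast
    have "norm (Q (x0 - xs)) \<le> \<gamma>1 * \<bar>\<psi> (x0 - xs)\<bar>"
      using h mult_right_mono[OF pp(3) abs_ge_zero[of "\<psi> (x0 - xs)"]] by linarith
    then have "near r1 \<gamma>1 x0" unfolding near_def using h pp by auto
    then show "bij (blinfun_apply (J x0))" by (rule bij_J[OF pp(1)])
  qed
  have seqpart: "x \<longlonglongrightarrow> xs \<and>
          (\<exists>K1>0. \<forall>j. norm (Q (x (Suc j) - xs)) \<le> K1 * (norm (x j - xs))^2) \<and>
          (\<lambda>j. (\<bar>\<psi> (x (Suc j) - xs)\<bar> * Mp) / (\<bar>\<psi> (x j - xs)\<bar> * Mp)) \<longlonglongrightarrow> 1/2"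
    if hx: "x 0 \<in> Wr \<rho> \<gamma>" "\<forall>j. x j \<in> ball xs \<delta> \<longrightarrow> norm (J (x j) (x (Suc j) - x j) + f (x j)) \<le> c * (norm (f (x j)))^2"
      and rg: "\<rho> \<le> \<rho>0" "0 < \<gamma>" "\<gamma> \<le> g / Mp" for x \<rho> \<gamma>
  proof -
    have h: "norm (x 0 - xs) \<le> \<rho>0 \<and> \<psi> (x 0 - xs) \<noteq> 0 \<and> norm (Q (x 0 - xs)) \<le> g * \<bar>\<psi> (x 0 - xs)\<bar>"
      using inW hx rg by blast
    have T: "\<And>j. x j \<in> ball xs \<delta> \<Longrightarrow> norm (J (x j) (x (Suc j) - x j) + f (x j)) \<le> c * (norm (f (x j)))^2"
      using hx by blast
    note I = iterate[OF p conjunct1[OF h] conjunct1[OF conjunct2[OF h]] conjunct2[OF conjunct2[OF h]] T]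
    have "(\<lambda>j. (\<bar>\<psi> (x (Suc j) - xs)\<bar> * Mp) / (\<bar>\<psi> (x j - xs)\<bar> * Mp)) = (\<lambda>j. \<bar>\<psi> (x (Suc j) - xs)\<bar> / \<bar>\<psi> (x j - xs)\<bar>)"
      using Mp_pos by simp
    then show ?thesis using I by simp
  qed
  show ?thesis
    apply (rule exI[of _ \<rho>0])
    apply (rule conjI)
     apply (rule pp(4))
    apply (rule exI[of _ "g / Mp"])
    apply (rule conjI)
    using pp Mp_pos apply simp
    using bijpart seqpart by blast
qed

end

theorem theorem5p2:
  fixes f :: "real^'n \<Rightarrow> real^'n" and xs :: "real^'n"
    and J :: "real^'n \<Rightarrow> ((real^'n) \<Rightarrow>\<^sub>L (real^'n))"
    and H :: "real^'n \<Rightarrow> ((real^'n) \<Rightarrow>\<^sub>L ((real^'n) \<Rightarrow>\<^sub>L (real^'n)))"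
    and phi :: "real^'n" and c :: real and \<delta> :: real
  defines "N \<equiv> {v. blinfun_apply (J xs) v = 0}"
    and "X \<equiv> range (blinfun_apply (J xs))"
  assumes root: "f xs = 0"
    and delta_pos: "\<delta> > 0"
    and deriv1: "\<forall>x\<in>ball xs \<delta>. (f has_derivative blinfun_apply (J x)) (at x)"
    and deriv2: "\<forall>x\<in>ball xs \<delta>. (J has_derivative blinfun_apply (H x)) (at x)"
    and lipschitz: "\<exists>L. \<forall>x\<in>ball xs \<delta>. \<forall>y\<in>ball xs \<delta>. norm (H x - H y) \<le> L * norm (x - y)"
    and phi_nz: "phi \<noteq> 0"
    and null_span: "N = span {phi}"
    and closed_range: "closed X"
    and direct_sum: "N \<inter> X = {0}" "{u + v | u v. u \<in> N \<and> v \<in> X} = UNIV"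
    and nondeg: "proj_along N X (blinfun_apply (blinfun_apply (H xs) phi) phi) \<noteq> 0"
    and D1_nonsing: "\<forall>x. proj_along N X (x - xs) \<noteq> 0 \<longrightarrow>
        bij_betw (\<lambda>z. proj_along N X (blinfun_apply (blinfun_apply (H xs)
                     (proj_along N X (x - xs))) (proj_along N X z))) N N"
  shows "\<exists>\<rho>0>0. \<exists>\<gamma>0>0. \<forall>\<rho> \<gamma>. 0 < \<rho> \<and> \<rho> \<le> \<rho>0 \<and> 0 < \<gamma> \<and> \<gamma> \<le> \<gamma>0 \<longrightarrow>
     (\<forall>x0 \<in> W_region (proj_along N X) xs \<rho> \<gamma>. bij (blinfun_apply (J x0))) \<and>
     (\<forall>x P V. x 0 \<in> W_region (proj_along N X) xs \<rho> \<gamma> \<and> nlkrylov_iterates f x P V \<and>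
        (\<forall>j D. (f has_derivative D) (at (x j)) \<longrightarrow>
            norm (D (x (Suc j) - x j) + f (x j)) \<le> c * (norm (f (x j)))\<^sup>2)
      \<longrightarrow> x \<longlonglongrightarrow> xs \<and>
          (\<exists>K1>0. \<forall>j. norm ((x (Suc j) - xs) - proj_along N X (x (Suc j) - xs))
                         \<le> K1 * (norm (x j - xs))\<^sup>2) \<and>
          (\<lambda>j. norm (proj_along N X (x (Suc j) - xs)) / norm (proj_along N X (x j - xs)))
             \<longlonglongrightarrow> 1 / 2)"
proof -
  obtain L0 where L0: "\<forall>x\<in>ball xs \<delta>. \<forall>y\<in>ball xs \<delta>. norm (H x - H y) \<le> L0 * norm (x - y)"
    using lipschitz by blast
  define L where "L = max L0 0"
  have lipL: "norm (H x - H y) \<le> L * norm (x - y)" if "x \<in> ball xs \<delta>" "y \<in> ball xs \<delta>" for x y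
  proof -
    have "L0 * norm (x - y) \<le> L * norm (x - y)" unfolding L_def by (rule mult_right_mono) auto
    then show ?thesis using L0 that by force
  qed
  have linA: "linear (blinfun_apply (J xs))"
    by (rule bounded_linear.linear[OF blinfun.bounded_linear_right])
  have subX: "subspace X" unfolding X_def
    by (rule linear_subspace_image[OF linA subspace_UNIV])
  have subN: "subspace N" unfolding null_span by (rule subspace_span)
  have phiN: "phi \<in> N" unfolding null_span by (rule span_base) simp
  have scN: "k *\<^sub>R phi \<in> N" for k using subspace_scale[OF subN phiN] by simp
  have inN: "u \<in> N \<Longrightarrow> \<exists>k. u = k *\<^sub>R phi" for u
    unfolding null_span span_singleton by auto
  have ex: "\<exists>k. v - k *\<^sub>R phi \<in> X" for v
  proof -
    have "v \<in> {u + v | u v. u \<in> N \<and> v \<in> X}" using direct_sum(2) by blast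
    then obtain u z where uz: "v = u + z" "u \<in> N" "z \<in> X" by blast
    then obtain k where "u = k *\<^sub>R phi" using inN by blast
    then have "v - k *\<^sub>R phi = z" using uz by simp
    then show ?thesis using uz by blast
  qed
  have uniq: "a = b" if "v - a *\<^sub>R phi \<in> X" "v - b *\<^sub>R phi \<in> X" for v a b
  proof -
    have "(v - a *\<^sub>R phi) - (v - b *\<^sub>R phi) \<in> X" by (rule subspace_diff[OF subX that])
    then have "(b - a) *\<^sub>R phi \<in> X" by (simp add: algebra_simps)
    moreover have "(b - a) *\<^sub>R phi \<in> N" by (rule scN)
    ultimately have "(b - a) *\<^sub>R phi = 0" using direct_sum(1) by blast
    then show ?thesis using phi_nz by simp
  qed
  define \<psi> where "\<psi> v = (THE k. v - k *\<^sub>R phi \<in> X)" for v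
  have psiX: "v - \<psi> v *\<^sub>R phi \<in> X" for v
  proof -
    have "\<exists>!k. v - k *\<^sub>R phi \<in> X" using ex uniq by blast
    then show ?thesis unfolding \<psi>_def by (rule theI')
  qed
  have psi_eq: "\<psi> v = k" if "v - k *\<^sub>R phi \<in> X" for v k
    using uniq[OF psiX that] .
  have psi_add: "\<psi> (u + v) = \<psi> u + \<psi> v" for u v
  proof (rule psi_eq)
    have "(u - \<psi> u *\<^sub>R phi) + (v - \<psi> v *\<^sub>R phi) \<in> X" by (rule subspace_add[OF subX psiX psiX])
    then show "u + v - (\<psi> u + \<psi> v) *\<^sub>R phi \<in> X" by (simp add: algebra_simps)
  qed
  have psi_scale: "\<psi> (k *\<^sub>R v) = k * \<psi> v" for k v
  proof (rule psi_eq)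
    have "k *\<^sub>R (v - \<psi> v *\<^sub>R phi) \<in> X" using subspace_scale[OF subX psiX] by simp
    then show "k *\<^sub>R v - (k * \<psi> v) *\<^sub>R phi \<in> X" by (simp add: algebra_simps)
  qed
  have lpsi: "linear \<psi>" by (rule linearI) (simp_all add: psi_add psi_scale)
  obtain C\<psi> where Cp: "C\<psi> > 0" "\<And>v. norm (\<psi> v) \<le> C\<psi> * norm v"
    by (rule linear_bounded_pos[OF lpsi]) blast
  have psi_phi: "\<psi> phi = 1" by (rule psi_eq) (simp add: subspace_0[OF subX])
  have A_phi: "J xs phi = 0" using phiN by (simp add: N_def)
  have psi_A: "\<psi> (J xs v) = 0" for v by (rule psi_eq) (simp add: X_def)
  have "\<exists>e>0. \<forall>x\<in>X. norm (J xs x) \<ge> e * norm x"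
  proof (rule injective_imp_isometric[OF closed_range subX blinfun.bounded_linear_right])
    show "\<forall>x\<in>X. J xs x = 0 \<longrightarrow> x = 0" using direct_sum(1) by (auto simp: N_def)
  qed
  then obtain \<alpha> where al: "\<alpha> > 0" "\<And>x. x \<in> X \<Longrightarrow> norm (J xs x) \<ge> \<alpha> * norm x" by blast
  have proj: "proj_along N X v = \<psi> v *\<^sub>R phi" for v
    unfolding proj_along_def
  proof (rule the_equality)
    show "\<psi> v *\<^sub>R phi \<in> N \<and> v - \<psi> v *\<^sub>R phi \<in> X" using scN psiX by blast
    fix u assume u: "u \<in> N \<and> v - u \<in> X"
    then obtain k where k: "u = k *\<^sub>R phi" using inN by blast
    then have "\<psi> v = k" using u psi_eq by blast
    then show "u = \<psi> v *\<^sub>R phi" using k by simp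
  qed
  have beta: "\<psi> (H xs phi phi) \<noteq> 0" using nondeg by (simp add: proj)
  interpret nk f J H xs \<delta> L phi \<psi> C\<psi> \<alpha>
  proof
    show "\<delta> > 0" by (fact delta_pos)
    show "\<And>x. x \<in> ball xs \<delta> \<Longrightarrow> (f has_derivative blinfun_apply (J x)) (at x)" using deriv1 by blast
    show "\<And>x. x \<in> ball xs \<delta> \<Longrightarrow> (J has_derivative blinfun_apply (H x)) (at x)" using deriv2 by blast
    show "\<And>x y. x \<in> ball xs \<delta> \<Longrightarrow> y \<in> ball xs \<delta> \<Longrightarrow> norm (H x - H y) \<le> L * norm (x - y)" by (rule lipL)
    show "L \<ge> 0" by (simp add: L_def)
    show "f xs = 0" by (fact root)
    show "\<And>u v. \<psi> (u + v) = \<psi> u + \<psi> v" by (rule psi_add)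
    show "\<And>c v. \<psi> (c *\<^sub>R v) = c * \<psi> v" by (rule psi_scale)
    show "\<And>v. \<bar>\<psi> v\<bar> \<le> C\<psi> * norm v" using Cp by simp
    show "C\<psi> > 0" by (fact Cp)
    show "\<psi> phi = 1" by (fact psi_phi)
    show "J xs phi = 0" by (fact A_phi)
    show "\<And>v. \<psi> (J xs v) = 0" by (rule psi_A)
    show "\<alpha> > 0" by (fact al)
    show "\<And>v. \<alpha> * norm (v - \<psi> v *\<^sub>R phi) \<le> norm (J xs (v - \<psi> v *\<^sub>R phi))" using al psiX by blast
    show "\<psi> (H xs phi phi) \<noteq> 0" by (fact beta)
  qed
  have Weq: "W_region (proj_along N X) xs \<rho> \<gamma> = Wr \<rho> \<gamma>" for \<rho> \<gamma>
    by (simp add: W_region_def Wr_def proj Q_def mult_ac)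
  have Qeq: "v - proj_along N X v = Q v" for v by (simp add: proj Q_def)
  have Peq: "norm (proj_along N X v) = \<bar>\<psi> v\<bar> * norm phi" for v by (simp add: proj)
  obtain \<rho>0 \<gamma>0 where R: "\<rho>0 > 0" "\<gamma>0 > 0"
    "\<And>\<rho> \<gamma>. 0 < \<rho> \<and> \<rho> \<le> \<rho>0 \<and> 0 < \<gamma> \<and> \<gamma> \<le> \<gamma>0 \<Longrightarrow>
     (\<forall>x0 \<in> Wr \<rho> \<gamma>. bij (blinfun_apply (J x0))) \<and>
     (\<forall>x. x 0 \<in> Wr \<rho> \<gamma> \<and>
        (\<forall>j. x j \<in> ball xs \<delta> \<longrightarrow> norm (J (x j) (x (Suc j) - x j) + f (x j)) \<le> c * (norm (f (x j)))^2)
      \<longrightarrow> x \<longlonglongrightarrow> xs \<and>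
          (\<exists>K1>0. \<forall>j. norm (Q (x (Suc j) - xs)) \<le> K1 * (norm (x j - xs))^2) \<and>
          (\<lambda>j. (\<bar>\<psi> (x (Suc j) - xs)\<bar> * norm phi) / (\<bar>\<psi> (x j - xs)\<bar> * norm phi)) \<longlonglongrightarrow> 1/2)"
    using final[of c] by blast
  show ?thesis
  proof (rule exI[of _ \<rho>0], rule conjI[OF R(1)], rule exI[of _ \<gamma>0], rule conjI[OF R(2)], intro allI impI)
    fix \<rho> \<gamma> assume rg: "0 < \<rho> \<and> \<rho> \<le> \<rho>0 \<and> 0 < \<gamma> \<and> \<gamma> \<le> \<gamma>0"
    note RR = R(3)[OF rg]
    show "(\<forall>x0\<in>W_region (proj_along N X) xs \<rho> \<gamma>. bij (blinfun_apply (J x0))) \<and>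
     (\<forall>x P V. x 0 \<in> W_region (proj_along N X) xs \<rho> \<gamma> \<and> nlkrylov_iterates f x P V \<and>
        (\<forall>j D. (f has_derivative D) (at (x j)) \<longrightarrow>
            norm (D (x (Suc j) - x j) + f (x j)) \<le> c * (norm (f (x j)))\<^sup>2)
      \<longrightarrow> x \<longlonglongrightarrow> xs \<and>
          (\<exists>K1>0. \<forall>j. norm ((x (Suc j) - xs) - proj_along N X (x (Suc j) - xs))
                         \<le> K1 * (norm (x j - xs))\<^sup>2) \<and>
          (\<lambda>j. norm (proj_along N X (x (Suc j) - xs)) / norm (proj_along N X (x j - xs)))
             \<longlonglongrightarrow> 1 / 2)"
    proof (rule conjI, rule_tac [2] allI, rule_tac [2] allI, rule_tac [2] allI, rule_tac [2] impI)
    show "\<forall>x0\<in>W_region (proj_along N X) xs \<rho> \<gamma>. bij (blinfun_apply (J x0))"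
      using RR by (simp add: Weq)
    fix x :: "nat \<Rightarrow> real^'n" and P V :: "nat \<Rightarrow> (real^'n) list"
    assume hx: "x 0 \<in> W_region (proj_along N X) xs \<rho> \<gamma> \<and> nlkrylov_iterates f x P V \<and>
        (\<forall>j D. (f has_derivative D) (at (x j)) \<longrightarrow>
            norm (D (x (Suc j) - x j) + f (x j)) \<le> c * (norm (f (x j)))\<^sup>2)"
    have T: "\<forall>j. x j \<in> ball xs \<delta> \<longrightarrow> norm (J (x j) (x (Suc j) - x j) + f (x j)) \<le> c * (norm (f (x j)))^2"
      using hx deriv1 by blast
    have x0: "x 0 \<in> Wr \<rho> \<gamma>" using hx Weq by blast
    have C: "x \<longlonglongrightarrow> xs \<and>
          (\<exists>K1>0. \<forall>j. norm (Q (x (Suc j) - xs)) \<le> K1 * (norm (x j - xs))^2) \<and>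
          (\<lambda>j. (\<bar>\<psi> (x (Suc j) - xs)\<bar> * norm phi) / (\<bar>\<psi> (x j - xs)\<bar> * norm phi)) \<longlonglongrightarrow> 1/2"
      using RR x0 T by blast
    show "x \<longlonglongrightarrow> xs \<and>
          (\<exists>K1>0. \<forall>j. norm ((x (Suc j) - xs) - proj_along N X (x (Suc j) - xs))
                         \<le> K1 * (norm (x j - xs))\<^sup>2) \<and>
          (\<lambda>j. norm (proj_along N X (x (Suc j) - xs)) / norm (proj_along N X (x j - xs)))
             \<longlonglongrightarrow> 1 / 2"
      using C by (simp only: Qeq Peq)
  qed
  qed
qed

end
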